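(* Let $V\ge 0$ be an integrable random variable with mean $\mu=\mathbb{E}[V]$ and let $c\ge 0$. Let $u^{\mathsf{rsv}}, u^{\mathsf{bkp}}, W^{\mathsf{OI}}, W^{\mathsf{NOI}}$ be as defined in the context. Then for every $r\in\mathbb{R}$, \[ \min\{c+\mathbb{E}[\min\{V,r\}],\ r\}=\mathbb{E}[\min\{W^{\mathsf{OI}},r\}], \qquad \min\{c+\mathbb{E}[\min\{V,r\}],\ r,\ \mu\}=\mathbb{E}[\min\{W^{\mathsf{NOI}},r\}]. \] (The left-hand sides are the optimal expected costs of choosing between one item with price $V$ and inspection cost $c$ and an outside option of known cost $r$, under obligatory and nonobligatory inspection respectively.)
   Context: An item has inspection cost $c\ge 0$ and a random hidden price $V\ge 0$ with finite mean $\mu=\mathbb{E}[V]$. Its reservation price $u^{\mathsf{rsv}}$ and backup price $u^{\mathsf{bkp}}$ are defined by $\mathbb{E}[(u^{\mathsf{rsv}}-V)^+]=c$ and $\mathbb{E}[(V-u^{\mathsf{bkp}})^+]=c$ (when $c>0$ these solutions are unique; in general take $u^{\mathsf{rsv}}=\sup\{u:\mathbb{E}[(u-V)^+]\le c\}$ and $u^{\mathsf{bkp}}=\inf\{u:\mathbb{E}[(V-u)^+]\le c\}$, possibly $+\infty$). The obligatory-inspection surrogate price is the random variable $W^{\mathsf{OI}}=\max\{V,u^{\mathsf{rsv}}\}$. The nonobligatory-inspection surrogate price is the random variable $W^{\mathsf{NOI}}=\min\{W^{\mathsf{OI}},u^{\mathsf{bkp}}\}$ if $u^{\mathsf{rsv}}<u^{\mathsf{bkp}}$,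 and $W^{\mathsf{NOI}}=\mu$ (deterministically) if $u^{\mathsf{rsv}}\ge u^{\mathsf{bkp}}$. *)

theory Defs
  imports "HOL-Probability.Probability"
begin

definition rsv_price :: "'a measure \<Rightarrow> ('a \<Rightarrow> real) \<Rightarrow> real \<Rightarrow> ereal" where
  "rsv_price M V c = Sup {ereal u | u. (\<integral>x. max (u - V x) 0 \<partial>M) \<le> c}"

text \<open>Backup price: inf of u with E[(V - u)^+] \<le> c, taken in the extended reals
  (it is +\<infinity> if no such real u exists).\<close>
definition bkp_price :: "'a measure \<Rightarrow> ('a \<Rightarrow> real) \<Rightarrow> real \<Rightarrow> ereal" where
  "bkp_price M V c = Inf {ereal u | u. (\<integral>x. max (V x - u) 0 \<partial>M) \<le> c}"

definition W_OI :: "'a measure \<Rightarrow> ('a \<Rightarrow> real) \<Rightarrow> real \<Rightarrow> 'a \<Rightarrow> real" where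
  "W_OI M V c x = real_of_ereal (max (ereal (V x)) (rsv_price M V c))"

definition W_NOI :: "'a measure \<Rightarrow> ('a \<Rightarrow> real) \<Rightarrow> real \<Rightarrow> 'a \<Rightarrow> real" where
  "W_NOI M V c x =
     (if rsv_price M V c < bkp_price M V c
      then real_of_ereal (min (max (ereal (V x)) (rsv_price M V c)) (bkp_price M V c))
      else (\<integral>y. V y \<partial>M))"

end

theory Submission
  imports Defs
begin

theorem mainTheorem1:
  fixes M :: "'a measure" and V :: "'a \<Rightarrow> real" and c r :: real
  assumes "prob_space M"
    and "V \<in> borel_measurable M"
    and "integrable M V"
    and "\<forall>x\<in>space M. V x \<ge> 0"
    and "c \<ge> 0"
  shows "min (c + (\<integral>x. min (V x) r \<partial>M)) r = (\<integral>x. min (W_OI M V c x) r \<partial>M)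
       \<and> min (min (c + (\<integral>x. min (V x) r \<partial>M)) r) (\<integral>x. V x \<partial>M)
           = (\<integral>x. min (W_NOI M V c x) r \<partial>M)"
proof -
  interpret P: prob_space M by fact
  note V[measurable] = assms(2)
  have [simp]: "measure M (space M) = 1" by (rule P.prob_space)
  have iV: "integrable M V" by fact
  have nn: "\<And>x. x \<in> space M \<Longrightarrow> V x \<ge> 0" using assms(4) by auto
  define h where "h u = (\<integral>x. min (V x) u \<partial>M)" for u
  define \<mu> where "\<mu> = (\<integral>x. V x \<partial>M)"
  have ic: "\<And>a::real. integrable M (\<lambda>x. a)" by simp
  have imin: "\<And>u. integrable M (\<lambda>x. min (V x) u)" using iV ic by auto
  have imm: "\<And>u s. integrable M (\<lambda>x. min (max (V x) u) s)" using iV ic by auto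
  have hmono: "\<And>a b. a \<le> b \<Longrightarrow> h a \<le> h b"
    unfolding h_def by (rule Bochner_Integration.integral_mono[OF imin imin]) auto
  have hlip: "\<And>a b. a \<le> b \<Longrightarrow> h b \<le> h a + (b - a)"
  proof -
    fix a b :: real assume ab: "a \<le> b"
    have "h b \<le> (\<integral>x. min (V x) a + (b - a) \<partial>M)"
      unfolding h_def by (rule Bochner_Integration.integral_mono) (use imin ic ab in auto)
    also have "\<dots> = h a + (b - a)" unfolding h_def
      using Bochner_Integration.integral_add[OF imin[of a] ic[of "b - a"]] by simp
    finally show "h b \<le> h a + (b - a)" .
  qed
  have hmu: "\<And>u. h u \<le> \<mu>" unfolding h_def \<mu>_def
    by (rule Bochner_Integration.integral_mono[OF imin iV]) auto
  have hu: "\<And>u. h u \<le> u"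
  proof -
    fix u
    have "h u \<le> (\<integral>x. u \<partial>M)" unfolding h_def by (rule Bochner_Integration.integral_mono[OF imin]) auto
    thus "h u \<le> u" by simp
  qed
  have h0: "h 0 = 0"
  proof -
    have "h 0 = (\<integral>x. 0 \<partial>M)" unfolding h_def
      by (rule Bochner_Integration.integral_cong[OF refl]) (use nn in auto)
    thus ?thesis by simp
  qed
  have fid: "\<And>u. (\<integral>x. max (u - V x) 0 \<partial>M) = u - h u"
  proof -
    fix u
    have "(\<integral>x. max (u - V x) 0 \<partial>M) = (\<integral>x. u - min (V x) u \<partial>M)"
      by (rule Bochner_Integration.integral_cong[OF refl]) auto
    also have "\<dots> = u - h u" unfolding h_def
      using Bochner_Integration.integral_diff[OF ic[of u] imin[of u]] by simp
    finally show "(\<integral>x. max (u - V x) 0 \<partial>M) = u - h u" .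
  qed
  have gid: "\<And>u. (\<integral>x. max (V x - u) 0 \<partial>M) = \<mu> - h u"
  proof -
    fix u
    have "(\<integral>x. max (V x - u) 0 \<partial>M) = (\<integral>x. V x - min (V x) u \<partial>M)"
      by (rule Bochner_Integration.integral_cong[OF refl]) auto
    also have "\<dots> = \<mu> - h u" unfolding h_def \<mu>_def
      using Bochner_Integration.integral_diff[OF iV imin[of u]] by simp
    finally show "(\<integral>x. max (V x - u) 0 \<partial>M) = \<mu> - h u" .
  qed
  have P1: "\<And>u s. u < s \<Longrightarrow> (\<integral>x. min (max (V x) u) s \<partial>M) = h s + (u - h u)"
  proof -
    fix u s :: real assume us: "u < s"
    have "(\<integral>x. min (max (V x) u) s \<partial>M) = (\<integral>x. min (V x) s + max (u - V x) 0 \<partial>M)"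
      by (rule Bochner_Integration.integral_cong[OF refl]) (use us in auto)
    also have "\<dots> = h s + (\<integral>x. max (u - V x) 0 \<partial>M)" unfolding h_def
      using Bochner_Integration.integral_add[OF imin[of s], of "\<lambda>x. max (u - V x) 0"] iV ic by simp
    also have "\<dots> = h s + (u - h u)" using fid[of u] by simp
    finally show "(\<integral>x. min (max (V x) u) s \<partial>M) = h s + (u - h u)" .
  qed
  have P2: "\<And>u s. s \<le> u \<Longrightarrow> (\<integral>x. min (max (V x) u) s \<partial>M) = s"
  proof -
    fix u s :: real assume us: "s \<le> u"
    have "(\<integral>x. min (max (V x) u) s \<partial>M) = (\<integral>x. s \<partial>M)"
      by (rule Bochner_Integration.integral_cong[OF refl]) (use us in auto)
    thus "(\<integral>x. min (max (V x) u) s \<partial>M) = s" by simp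
  qed
  define S where "S = {u. u - h u \<le> c}"
  have S_eq: "{u. (\<integral>x. max (u - V x) 0 \<partial>M) \<le> c} = S" unfolding S_def fid ..
  have S0: "0 \<in> S" unfolding S_def using h0 assms(5) by simp
  have Sbdd: "\<And>u. u \<in> S \<Longrightarrow> u \<le> c + \<mu>"
  proof -
    fix u assume "u \<in> S" hence "u - h u \<le> c" by (simp add: S_def)
    with hmu[of u] show "u \<le> c + \<mu>" by linarith
  qed
  define us where "us = Sup S"
  have bddS: "bdd_above S" using Sbdd by (auto simp: bdd_above_def)
  have usS: "us \<in> S"
  proof (rule ccontr)
    assume "us \<notin> S"
    hence gt: "us - h us > c" unfolding S_def by simp
    have lt: "us - (us - h us - c) < Sup S" using gt us_def by simp
    obtain s where s: "s \<in> S" "s > us - (us - h us - c)"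
      using less_cSupE[OF lt] S0 by blast
    have "s \<le> us" using s(1) bddS us_def cSup_upper by blast
    with hmono[of s us] s show False unfolding S_def by auto
  qed
  have usge: "us - h us \<ge> c"
  proof (rule ccontr)
    assume nc: "\<not> ?thesis"
    define d where "d = c - (us - h us)"
    have d: "d > 0" using nc d_def by simp
    have "(us + d) - h (us + d) \<le> c" using hmono[of us "us + d"] d d_def by simp
    hence "us + d \<in> S" unfolding S_def by simp
    hence "us + d \<le> us" using bddS us_def cSup_upper by blast
    with d show False by simp
  qed
  have fus: "us - h us = c" using usS usge unfolding S_def by simp
  have S_at: "S = {..us}"
  proof
    show "S \<subseteq> {..us}" using bddS us_def cSup_upper by auto
    show "{..us} \<subseteq> S"
    proof
      fix u assume "u \<in> {..us}"
      hence "u \<le> us" by simp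
      with hlip[of u us] fus show "u \<in> S" unfolding S_def by simp
    qed
  qed
  have rsv: "rsv_price M V c = ereal us"
  proof -
    have "{ereal u | u. (\<integral>x. max (u - V x) 0 \<partial>M) \<le> c} = ereal ` {..us}"
      using S_eq S_at by auto
    moreover have "Sup (ereal ` {..us}) = ereal us"
      by (rule Sup_eqI) auto
    ultimately show ?thesis unfolding rsv_price_def by simp
  qed
  have WOI: "\<And>x. W_OI M V c x = max (V x) us"
    unfolding W_OI_def rsv by (simp add: max_def)
  have part1: "\<And>s. min (c + h s) s = (\<integral>x. min (max (V x) us) s \<partial>M)"
  proof -
    fix s
    show "min (c + h s) s = (\<integral>x. min (max (V x) us) s \<partial>M)"
    proof (cases "s \<le> us")
      case True
      have "s \<in> S" using True S_at by auto
      then show ?thesis using P2[OF True] unfolding S_def by simp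
    next
      case False
      hence "s \<notin> S" using S_at by auto
      then show ?thesis using P1[of us s] False fus unfolding S_def by simp
    qed
  qed
  have goal1: "min (c + (\<integral>x. min (V x) r \<partial>M)) r = (\<integral>x. min (W_OI M V c x) r \<partial>M)"
    using part1[of r] unfolding WOI h_def by simp
  define T where "T = {u. \<mu> - h u \<le> c}"
  have T_eq: "{u. (\<integral>x. max (V x - u) 0 \<partial>M) \<le> c} = T" unfolding T_def gid ..
  have goal2: "min (min (c + h r) r) \<mu> = (\<integral>x. min (W_NOI M V c x) r \<partial>M)"
  proof (cases "T = {}")
    case True
    have "{ereal u | u. (\<integral>x. max (V x - u) 0 \<partial>M) \<le> c} = {}"
      using T_eq True by auto
    hence bkp: "bkp_price M V c = \<infinity>" unfolding bkp_price_def by (simp add: top_ereal_def)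
    have W: "\<And>x. W_NOI M V c x = max (V x) us"
      unfolding W_NOI_def bkp rsv by (simp add: max_def)
    have "\<not> (\<mu> - h r \<le> c)" using True unfolding T_def by auto
    hence "c + h r < \<mu>" by linarith
    then show ?thesis unfolding W using part1[of r] by simp
  next
    case False
    then obtain t0 where t0: "t0 \<in> T" by auto
    have Tbdd: "\<And>u. u \<in> T \<Longrightarrow> \<mu> - c \<le> u"
    proof -
      fix u assume "u \<in> T" hence "\<mu> - h u \<le> c" by (simp add: T_def)
      with hu[of u] show "\<mu> - c \<le> u" by linarith
    qed
    have bddT: "bdd_below T" using Tbdd by (auto simp: bdd_below_def)
    define b where "b = Inf T"
    have bT: "b \<in> T"
    proof (rule ccontr)
      assume "b \<notin> T"
      hence gt: "\<mu> - h b > c" unfolding T_def by simp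
      have lt: "Inf T < b + (\<mu> - h b - c)" using gt b_def by simp
      obtain t where t: "t \<in> T" "t < b + (\<mu> - h b - c)"
        using cInf_lessD[OF _ lt] t0 by blast
      have "b \<le> t" using t(1) bddT b_def cInf_lower by blast
      with hlip[of b t] t gt show False unfolding T_def by auto
    qed
    have gb: "\<mu> - h b \<ge> c"
    proof (rule ccontr)
      assume nc: "\<not> ?thesis"
      define d where "d = c - (\<mu> - h b)"
      have d: "d > 0" using nc d_def by simp
      have "\<mu> - h (b - d) \<le> c" using hlip[of "b - d" b] d d_def by simp
      hence "b - d \<in> T" unfolding T_def by simp
      hence "b \<le> b - d" using bddT b_def cInf_lower by blast
      with d show False by simp
    qed
    have gbc: "\<mu> - h b = c" using bT gb unfolding T_def by simp
    have T_at: "T = {b..}"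
    proof
      show "T \<subseteq> {b..}" using bddT b_def cInf_lower by auto
      show "{b..} \<subseteq> T"
      proof
        fix u assume "u \<in> {b..}"
        hence "b \<le> u" by simp
        with hmono[of b u] gbc show "u \<in> T" unfolding T_def by simp
      qed
    qed
    have bkp: "bkp_price M V c = ereal b"
    proof -
      have "{ereal u | u. (\<integral>x. max (V x - u) 0 \<partial>M) \<le> c} = ereal ` {b..}"
        using T_eq T_at by auto
      moreover have "Inf (ereal ` {b..}) = ereal b"
        by (rule Inf_eqI) auto
      ultimately show ?thesis unfolding bkp_price_def by simp
    qed
    show ?thesis
    proof (cases "us < b")
      case True
      have W: "\<And>x. W_NOI M V c x = min (max (V x) us) b"
        unfolding W_NOI_def bkp rsv using True by (simp add: max_def min_def)
      show ?thesis
      proof (cases "r \<le> b")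
        case rb: True
        have eq: "(\<integral>x. min (W_NOI M V c x) r \<partial>M) = (\<integral>x. min (max (V x) us) r \<partial>M)"
          unfolding W by (rule Bochner_Integration.integral_cong[OF refl]) (use rb in auto)
        have "c + h r \<le> \<mu>"
        proof (cases "r = b")
          case True then show ?thesis using gbc by simp
        next
          case False
          hence "r \<notin> T" using rb T_at by auto
          then show ?thesis unfolding T_def by simp
        qed
        then show ?thesis unfolding eq part1[symmetric] by simp
      next
        case rb: False
        have eq: "(\<integral>x. min (W_NOI M V c x) r \<partial>M) = (\<integral>x. min (max (V x) us) b \<partial>M)"
          unfolding W by (rule Bochner_Integration.integral_cong[OF refl]) (use rb in auto)
        have Eb: "(\<integral>x. min (max (V x) us) b \<partial>M) = \<mu>"
          using P1[OF True] fus gbc by simp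
        have "r \<in> T" using rb T_at by auto
        hence "c + h r \<ge> \<mu>" unfolding T_def by simp
        moreover have "\<mu> \<le> b" using part1[of b] Eb by simp
        ultimately show ?thesis unfolding eq Eb using rb by simp
      qed
    next
      case False
      have W: "\<And>x. W_NOI M V c x = \<mu>"
        unfolding W_NOI_def bkp rsv \<mu>_def using False by simp
      have "min (c + h r) r \<ge> min \<mu> r"
      proof (cases "r \<le> us")
        case True
        hence "r \<in> S" using S_at by auto
        then show ?thesis unfolding S_def by simp
      next
        case rf: False
        hence "r \<in> T" using T_at False by auto
        then show ?thesis unfolding T_def by simp
      qed
      then show ?thesis unfolding W by simp
    qed
  qed
  show ?thesis using goal1 goal2 unfolding h_def \<mu>_def by simp
qed

end
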